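(* Let $\mathcal{F}=\{f_i\}_{i=1}^k$ be a frame for $\mathcal{H}_n$ with $\operatorname{rob}(\mathcal{F})=r$, and let $P$ be the orthogonal projection onto a subspace $U$ of $\mathcal{H}_n$. Then the frame $P\mathcal{F}=\{Pf_i\}_{i=1}^k$ for $U$ has maximum robustness $r$ if and only if there exists a subset $\mathcal{F}'$ of $\mathcal{F}$ consisting of $k-r-1$ vectors which does not span $\mathcal{H}_n$ and satisfies $\operatorname{span}(\mathcal{F}')^\perp\subseteq U$.
   Context: $\mathcal{H}_n$ is an $n$-dimensional real or complex Hilbert space. A finite sequence of vectors in a finite-dimensional Hilbert space $V$ is a frame for $V$ iff it spans $V$. A frame $\{f_i\}_{i=1}^k$ for $V$ is robust to $r$ erasures if for every index set $I\subseteq\{1,\dots,k\}$ with $|I|=r$, the sequence $\{f_i\}_{i\notin I}$ still spans $V$. The maximum robustness $\operatorname{rob}(\mathcal{F})$ is the largest $r$ such that $\mathcal{F}$ is robust to $r$ erasures. *)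

theory Defs
  imports "HOL-Analysis.Analysis"
begin

text \<open>Vectors of the n-dimensional space are 'k^'n, 'k = real or complex, n = CARD('n).
  The parameter cj is the scalar conjugation (id for real, cnj for complex).\<close>

definition sinner :: "('k::field \<Rightarrow> 'k) \<Rightarrow> 'k^'n \<Rightarrow> 'k^'n \<Rightarrow> 'k" where
  "sinner cj x y = (\<Sum>i\<in>UNIV. x $ i * cj (y $ i))"

definition orth_compl :: "('k::field \<Rightarrow> 'k) \<Rightarrow> ('k^'n) set \<Rightarrow> ('k^'n) set" where
  "orth_compl cj S = {x. \<forall>y\<in>S. sinner cj y x = 0}"

definition is_orth_proj :: "('k::field \<Rightarrow> 'k) \<Rightarrow> ('k^'n) set \<Rightarrow> ('k^'n \<Rightarrow> 'k^'n) \<Rightarrow> bool" where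
  "is_orth_proj cj U P \<longleftrightarrow> (\<forall>x. P x \<in> U \<and> (\<forall>u\<in>U. sinner cj (x - P x) u = 0))"

definition is_frame :: "(nat \<Rightarrow> 'k::field^'n) \<Rightarrow> nat \<Rightarrow> ('k^'n) set \<Rightarrow> bool" where
  "is_frame f k V \<longleftrightarrow> vec.span (f ` {1..k}) = V"

definition robust_to :: "(nat \<Rightarrow> 'k::field^'n) \<Rightarrow> nat \<Rightarrow> ('k^'n) set \<Rightarrow> nat \<Rightarrow> bool" where
  "robust_to f k V r \<longleftrightarrow> (\<forall>I. I \<subseteq> {1..k} \<and> card I = r \<longrightarrow> vec.span (f ` ({1..k} - I)) = V)"

text \<open>Maximum robustness: largest r (necessarily r \<le> k, as an erasure set has at most k
  elements) such that the frame is robust to r erasures.\<close>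
definition rob :: "(nat \<Rightarrow> 'k::field^'n) \<Rightarrow> nat \<Rightarrow> ('k^'n) set \<Rightarrow> nat" where
  "rob f k V = Max {r. r \<le> k \<and> robust_to f k V r}"

end

theory Submission imports Defs begin

locale cjl =
  fixes cj :: "'k::field \<Rightarrow> 'k"
  assumes cj_add: "\<And>a b. cj (a+b) = cj a + cj b"
    and cj_mult: "\<And>a b. cj (a*b) = cj a * cj b"
    and cj_inv: "\<And>a. cj (cj a) = a"
begin

lemma cj0[simp]: "cj 0 = 0"
proof -
  have "cj 0 + cj 0 = cj 0 + 0" using cj_add[of 0 0] by simp
  then show ?thesis by (rule add_left_imp_eq)
qed
lemma cj_minus: "cj (a - b) = cj a - cj b"
  using cj_add[of "a-b" b] by (simp add: algebra_simps)

lemma sinner_add_left: "sinner cj (x+y) z = sinner cj x z + sinner cj y z"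
  by (simp add: sinner_def algebra_simps sum.distrib)
lemma sinner_diff_left: "sinner cj (x-y) z = sinner cj x z - sinner cj y z"
  by (simp add: sinner_def algebra_simps sum_subtractf)
lemma sinner_scale_left: "sinner cj (a *s x) z = a * sinner cj x z"
  by (simp add: sinner_def algebra_simps sum_distrib_left)
lemma sinner_zero_left[simp]: "sinner cj 0 z = 0"
  by (simp add: sinner_def)
lemma sinner_diff_right: "sinner cj x (y - z) = sinner cj x y - sinner cj x z"
  by (simp add: sinner_def cj_minus algebra_simps sum_subtractf)
lemma sinner_scale_right: "sinner cj x (a *s z) = cj a * sinner cj x z"
  by (simp add: sinner_def cj_mult algebra_simps sum_distrib_left)

lemma orth_subspace: "vec.subspace {v. sinner cj v y = 0}"
  unfolding vec.subspace_def by (simp add: sinner_add_left sinner_scale_left)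

lemma orth_span: assumes "\<And>v. v \<in> S \<Longrightarrow> sinner cj v y = 0" "v \<in> vec.span S"
  shows "sinner cj v y = 0"
  using vec.span_minimal[OF _ orth_subspace, of S y] assms by auto

lemma exists_orth:
  fixes S :: "('k^'n) set"
  assumes "vec.subspace S" "S \<noteq> UNIV"
  shows "\<exists>z. z \<noteq> 0 \<and> (\<forall>w\<in>S. sinner cj w z = 0)"
proof -
  obtain e where e: "e \<notin> S" using assms by auto
  obtain B where B: "B \<subseteq> S" "vec.independent B" "S \<subseteq> vec.span B"
    using vec.maximal_independent_subset[of S] by blast
  have eB: "e \<notin> vec.span B"
    using vec.span_minimal[OF B(1) assms(1)] e by auto
  have ind: "vec.independent (insert e B)"
    by (rule vec.independent_insertI[OF eB B(2)])
  interpret p: vector_space_pair "(*s) :: 'k \<Rightarrow> 'k^'n \<Rightarrow> _" "(*) :: 'k\<Rightarrow>'k\<Rightarrow>'k" by unfold_locales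
  obtain g where g: "Vector_Spaces.linear (*s) (*) g" "\<forall>x\<in>insert e B. g x = (if x = e then 1 else 0)"
    using p.linear_independent_extend[OF ind, of "\<lambda>x. if x = e then 1 else 0"] by blast
  interpret l: Vector_Spaces.linear "(*s) :: 'k \<Rightarrow> 'k^'n \<Rightarrow> _" "(*) :: 'k\<Rightarrow>'k\<Rightarrow>'k" g by (rule g(1))
  have gB: "g x = 0" if "x \<in> B" for x using g(2) that eB vec.span_base[OF that] by auto
  have gS: "g w = 0" if "w \<in> S" for w
    using l.eq_0_on_span[of B w] gB B(3) that by auto
  have gexp: "g x = (\<Sum>i\<in>UNIV. x$i * g (axis i 1))" for x
  proof -
    have "g x = g (\<Sum>i\<in>UNIV. (x$i) *s axis i 1)" by (simp add: basis_expansion)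
    also have "\<dots> = (\<Sum>i\<in>UNIV. x$i * g (axis i 1))" by (simp add: l.sum l.scale)
    finally show ?thesis .
  qed
  define z :: "'k^'n" where "z = (\<chi> i. cj (g (axis i 1)))"
  have sz: "sinner cj w z = g w" for w
    by (simp add: sinner_def z_def cj_inv gexp[of w])
  have "z \<noteq> 0" using sz[of e] g(2) by (auto simp: sinner_def)
  then show ?thesis using sz gS by auto
qed

end

lemma robust_mono:
  fixes f :: "nat \<Rightarrow> 'k::field^'n"
  assumes fr: "vec.span (f ` {1..k}) = V" and rs: "robust_to f k V s" and ts: "t \<le> s" and sk: "s \<le> k"
  shows "robust_to f k V t"
  unfolding robust_to_def
proof (intro allI impI)
  fix I assume I: "I \<subseteq> {1..k} \<and> card I = t"
  have fI: "finite I" using I finite_subset by blast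
  have "s - t \<le> card ({1..k} - I)" using I sk ts fI by (simp add: card_Diff_subset)
  then obtain A where A: "A \<subseteq> {1..k} - I" "card A = s - t" "finite A"
    by (rule obtain_subset_with_card_n)
  have dj: "I \<inter> A = {}" using A(1) by auto
  have c: "card (I \<union> A) = s" using card_Un_disjoint[OF fI A(3) dj] A(2) I ts by simp
  have sub: "I \<union> A \<subseteq> {1..k}" using A I by auto
  have "vec.span (f ` ({1..k} - (I \<union> A))) = V"
    using rs[unfolded robust_to_def, rule_format, OF conjI[OF sub c]] .
  moreover have "vec.span (f ` ({1..k} - (I \<union> A))) \<subseteq> vec.span (f ` ({1..k} - I))"
    by (intro vec.span_mono image_mono) auto
  moreover have "vec.span (f ` ({1..k} - I)) \<subseteq> vec.span (f ` {1..k})"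
    by (intro vec.span_mono image_mono) auto
  ultimately show "vec.span (f ` ({1..k} - I)) = V" using fr by auto
qed

lemma rob_eq:
  fixes f :: "nat \<Rightarrow> 'k::field^'n"
  assumes fr: "vec.span (f ` {1..k}) = V" and rr: "robust_to f k V r" and rk: "r < k"
  shows "rob f k V = r \<longleftrightarrow> \<not> robust_to f k V (r+1)"
proof -
  let ?S = "{r. r \<le> k \<and> robust_to f k V r}"
  have fin: "finite ?S" by (rule finite_subset[of _ "{..k}"]) auto
  have rin: "r \<in> ?S" using rr rk by auto
  show ?thesis
  proof
    assume m: "rob f k V = r"
    show "\<not> robust_to f k V (r+1)"
    proof
      assume "robust_to f k V (r+1)"
      then have "r+1 \<in> ?S" using rk by auto
      then have "r+1 \<le> Max ?S" by (rule Max_ge[OF fin])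
      then show False using m unfolding rob_def by simp
    qed
  next
    assume n: "\<not> robust_to f k V (r+1)"
    have "\<forall>s\<in>?S. s \<le> r"
    proof
      fix s assume "s \<in> ?S"
      then have s: "s \<le> k" "robust_to f k V s" by auto
      show "s \<le> r"
      proof (rule ccontr)
        assume "\<not> s \<le> r"
        then have "robust_to f k V (r+1)" using robust_mono[OF fr s(2) _ s(1), of "r+1"] by simp
        then show False using n by simp
      qed
    qed
    then show "rob f k V = r" unfolding rob_def using fin rin
      by (intro Max_eqI) auto
  qed
qed

context cjl begin

lemma main_generic:
  fixes f :: "nat \<Rightarrow> 'k^'n"
  assumes posdef: "\<And>x::'k^'n. sinner cj x x = 0 \<Longrightarrow> x = 0"
  assumes fr: "is_frame f k UNIV" and rb: "rob f k UNIV = r" and sU: "vec.subspace U"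
    and pr: "is_orth_proj cj U P"
  shows "rob (P \<circ> f) k U = r \<longleftrightarrow>
        (\<exists>J. J \<subseteq> {1..k} \<and> card J + r + 1 = k \<and> vec.span (f ` J) \<noteq> UNIV \<and>
             orth_compl cj (vec.span (f ` J)) \<subseteq> U)"
proof -
  let ?K = "{1..k::nat}"
  have PU: "P x \<in> U" for x using pr unfolding is_orth_proj_def by auto
  have Porth: "u \<in> U \<Longrightarrow> sinner cj (x - P x) u = 0" for x u using pr unfolding is_orth_proj_def by auto
  have uniq: "P x = u" if u: "u \<in> U" and o: "\<And>v. v \<in> U \<Longrightarrow> sinner cj (x - u) v = 0" for x u
  proof -
    have d: "P x - u \<in> U" using u PU sU by (simp add: vec.subspace_diff)
    have "sinner cj (P x - u) (P x - u) = sinner cj ((x - u) - (x - P x)) (P x - u)"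
      by (simp add: algebra_simps)
    also have "\<dots> = 0" using o[OF d] Porth[OF d] by (simp add: sinner_diff_left)
    finally have "P x - u = 0" by (rule posdef)
    then show ?thesis by simp
  qed
  have Pid: "P u = u" if "u \<in> U" for u using uniq[OF that] by simp
  have lin: "Vector_Spaces.linear (*s) (*s) P"
    unfolding Vector_Spaces.linear_iff
  proof (intro conjI allI)
    show "vector_space ((*s) :: 'k \<Rightarrow> 'k^'n \<Rightarrow> _)" by unfold_locales
    show "vector_space ((*s) :: 'k \<Rightarrow> 'k^'n \<Rightarrow> _)" by unfold_locales
    fix x y :: "'k^'n" and c :: 'k
    show "P (x + y) = P x + P y"
    proof (rule uniq)
      show "P x + P y \<in> U" using PU sU by (simp add: vec.subspace_add)
      fix v assume v: "v \<in> U"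
      have eq: "x + y - (P x + P y) = (x - P x) + (y - P y)" by (simp add: algebra_simps)
      show "sinner cj (x + y - (P x + P y)) v = 0"
        unfolding eq sinner_add_left using Porth[OF v, of x] Porth[OF v, of y] by simp
    qed
    show "P (c *s x) = c *s P x"
    proof (rule uniq)
      show "c *s P x \<in> U" using PU sU by (simp add: vec.subspace_scale)
      fix v assume "v \<in> U"
      have eq: "c *s x - c *s P x = c *s (x - P x)" by (simp add: vec.scale_right_diff_distrib)
      show "sinner cj (c *s x - c *s P x) v = 0" unfolding eq sinner_scale_left
        using Porth[OF \<open>v \<in> U\<close>, of x] by simp
    qed
  qed
  interpret L: Vector_Spaces.linear "(*s) :: 'k \<Rightarrow> 'k^'n \<Rightarrow> _" "(*s) :: 'k \<Rightarrow> 'k^'n \<Rightarrow> _" P by (rule lin)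
  have PUNIV: "P ` UNIV = U" using PU Pid by (auto intro: image_eqI[of _ P, OF Pid[symmetric]])
  have spanP: "vec.span ((P \<circ> f) ` X) = P ` vec.span (f ` X)" for X
  proof -
    have "(P \<circ> f) ` X = P ` (f ` X)" by (rule image_comp[symmetric])
    then show ?thesis using L.span_image[of "f ` X"] by simp
  qed
  have ff: "vec.span (f ` ?K) = UNIV" using fr unfolding is_frame_def .
  have frP: "vec.span ((P \<circ> f) ` ?K) = U" using spanP ff PUNIV by simp
  let ?S = "{r. r \<le> k \<and> robust_to f k UNIV r}"
  have fin: "finite ?S" by (rule finite_subset[of _ "{..k}"]) auto
  have r0: "robust_to f k UNIV 0" unfolding robust_to_def
  proof (intro allI impI)
    fix I :: "nat set" assume "I \<subseteq> ?K \<and> card I = 0"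
    then have "I = {}" using finite_subset[of I ?K] by auto
    then show "vec.span (f ` (?K - I)) = UNIV" using ff by simp
  qed
  have "0 \<in> ?S" using r0 by auto
  then have "Max ?S \<in> ?S" by (intro Max_in[OF fin]) auto
  then have rin: "r \<in> ?S" using rb unfolding rob_def by simp
  have nk: "\<not> robust_to f k UNIV k"
  proof
    assume a: "robust_to f k UNIV k"
    have "\<forall>I. I \<subseteq> ?K \<and> card I = k \<longrightarrow> vec.span (f ` (?K - I)) = UNIV" using a unfolding robust_to_def .
    then have "?K \<subseteq> ?K \<and> card ?K = k \<longrightarrow> vec.span (f ` (?K - ?K)) = UNIV" by (rule allE)
    then have "vec.span (f ` (?K - ?K)) = UNIV" by simp
    then have eqU: "(UNIV :: ('k^'n) set) = {0}" by simp
    have "axis undefined (1::'k) \<in> (UNIV :: ('k^'n) set)" by simp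
    then have "axis undefined (1::'k) = (0 :: 'k^'n)" unfolding eqU by simp
    moreover have "axis undefined (1::'k) \<noteq> (0 :: 'k^'n)" by (simp add: axis_eq_0_iff)
    ultimately show False by simp
  qed
  have rk: "r < k" using rin nk by (cases "r = k") auto
  have rr: "robust_to f k UNIV r" using rin by auto
  have rrP: "robust_to (P \<circ> f) k U r" unfolding robust_to_def
  proof (intro allI impI)
    fix I assume I: "I \<subseteq> ?K \<and> card I = r"
    have "\<forall>I. I \<subseteq> ?K \<and> card I = r \<longrightarrow> vec.span (f ` (?K - I)) = UNIV" using rr unfolding robust_to_def .
    then have "vec.span (f ` (?K - I)) = UNIV" using I by blast
    then show "vec.span ((P \<circ> f) ` (?K - I)) = U" using spanP PUNIV by simp
  qed
  have step1: "rob (P \<circ> f) k U = r \<longleftrightarrow> \<not> robust_to (P \<circ> f) k U (r+1)"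
    by (rule rob_eq[OF frP rrP rk])
  have core: "P ` vec.span (f ` J) \<noteq> U \<longleftrightarrow>
       vec.span (f ` J) \<noteq> UNIV \<and> orth_compl cj (vec.span (f ` J)) \<subseteq> U"
    if J: "J \<subseteq> ?K" "card J + r + 1 = k" for J
  proof -
    let ?W = "vec.span (f ` J)"
    show ?thesis
    proof
      assume PW: "P ` ?W \<noteq> U"
      show "?W \<noteq> UNIV \<and> orth_compl cj ?W \<subseteq> U"
      proof
        show WU: "?W \<noteq> UNIV" using PW PUNIV by auto
        let ?Kp = "{x. P x = 0}"
        have sKp: "vec.subspace ?Kp" by (rule L.subspace_kernel)
        have "vec.span (?W \<union> ?Kp) \<noteq> UNIV"
        proof
          assume all: "vec.span (?W \<union> ?Kp) = UNIV"
          have "U \<subseteq> P ` ?W"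
          proof
            fix u assume u: "u \<in> U"
            have "u \<in> vec.span (?W \<union> ?Kp)" using all by simp
            then obtain a b where ab: "u = a + b" "a \<in> vec.span ?W" "b \<in> vec.span ?Kp"
              unfolding vec.span_Un by auto
            have a: "a \<in> ?W" using ab(2) by (simp only: vec.span_span)
            have b: "P b = 0" using ab(3) sKp by (simp add: vec.span_eq_iff[THEN iffD2])
            have "u = P a" using Pid[OF u] ab(1) b by (simp add: L.add)
            then show "u \<in> P ` ?W" using a by auto
          qed
          moreover have "P ` ?W \<subseteq> U" using PU by auto
          ultimately show False using PW by auto
        qed
        then obtain z where z: "z \<noteq> 0" "\<forall>w\<in>vec.span (?W \<union> ?Kp). sinner cj w z = 0"
          using exists_orth[of "vec.span (?W \<union> ?Kp)"] by auto
        have zK: "z - P z \<in> ?Kp" using Pid[OF PU[of z]] by (simp add: L.diff)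
        have "z - P z \<in> vec.span (?W \<union> ?Kp)" using zK by (intro vec.span_base) auto
        then have "sinner cj (z - P z) z = 0" using z(2) by auto
        moreover have "sinner cj (z - P z) (P z) = 0" using Porth[OF PU[of z]] .
        ultimately have "sinner cj (z - P z) (z - P z) = 0" by (simp add: sinner_diff_right)
        then have zU: "z \<in> U" using posdef[of "z - P z"] PU[of z] by simp
        have zW: "sinner cj w z = 0" if "w \<in> ?W" for w
        proof -
          have "w \<in> vec.span (?W \<union> ?Kp)" using that by (intro vec.span_base) auto
          then show ?thesis using z(2) by auto
        qed
        have Ine: "?K - J \<noteq> {}"
        proof
          assume "?K - J = {}"
          then have "?K = J" using J by auto
          then have "card J = k" by (metis card_atLeastAtMost diff_Suc_1)
          then show False using J(2) by simp
        qed
        then obtain i where i: "i \<in> ?K - J" by blast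
        have fJ: "finite J" using J finite_subset by blast
        have cI: "card (?K - J) = r + 1" using J fJ by (simp add: card_Diff_subset)
        have cI': "card (?K - J - {i}) = r" using cI i by simp
        have "\<forall>I. I \<subseteq> ?K \<and> card I = r \<longrightarrow> vec.span (f ` (?K - I)) = UNIV"
          using rr unfolding robust_to_def .
        then have "?K - J - {i} \<subseteq> ?K \<and> card (?K - J - {i}) = r \<longrightarrow> vec.span (f ` (?K - (?K - J - {i}))) = UNIV"
          by (rule allE)
        then have "vec.span (f ` (?K - (?K - J - {i}))) = UNIV" using cI' by blast
        moreover have "?K - (?K - J - {i}) = insert i J" using J i by auto
        ultimately have spi: "vec.span (insert (f i) (f ` J)) = UNIV" by simp
        have zero: "y = 0" if "sinner cj (f i) y = 0" "\<And>w. w \<in> ?W \<Longrightarrow> sinner cj w y = 0" for y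
        proof -
          have "sinner cj v y = 0" if "v \<in> insert (f i) (f ` J)" for v
          proof (cases "v = f i")
            case True then show ?thesis using \<open>sinner cj (f i) y = 0\<close> by simp
          next
            case False
            then have "v \<in> f ` J" using that by auto
            then have "v \<in> ?W" by (rule vec.span_base)
            then show ?thesis using \<open>\<And>w. w \<in> ?W \<Longrightarrow> sinner cj w y = 0\<close> by simp
          qed
          then have "sinner cj y y = 0" using orth_span[of "insert (f i) (f ` J)" y y] spi by auto
          then show ?thesis using posdef by auto
        qed
        show "orth_compl cj ?W \<subseteq> U"
        proof
          fix x assume "x \<in> orth_compl cj ?W"
          then have xW: "sinner cj w x = 0" if "w \<in> ?W" for w using that unfolding orth_compl_def by auto
          define a where "a = sinner cj (f i) z"
          define b where "b = sinner cj (f i) x"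
          define y where "y = cj a *s x - cj b *s z"
          have "sinner cj (f i) y = 0"
            unfolding y_def by (simp add: sinner_diff_right sinner_scale_right cj_inv a_def b_def algebra_simps)
          moreover have "sinner cj w y = 0" if "w \<in> ?W" for w
            unfolding y_def using xW[OF that] zW[OF that] by (simp add: sinner_diff_right sinner_scale_right)
          ultimately have y0: "y = 0" using zero by blast
          have a0: "a \<noteq> 0"
          proof
            assume "a = 0"
            then have "z = 0" using zero[of z] zW unfolding a_def by blast
            then show False using z by simp
          qed
          have ca: "cj a \<noteq> 0" using a0 cj_inv[of a] by auto
          have "cj a *s x = cj b *s z" using y0 unfolding y_def by simp
          then have "inverse (cj a) *s (cj a *s x) = inverse (cj a) *s (cj b *s z)" by simp
          then have "x = inverse (cj a) *s (cj b *s z)" using ca by simp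
          moreover have "inverse (cj a) *s (cj b *s z) \<in> U"
            using zU sU by (intro vec.subspace_scale) (auto intro: vec.subspace_scale)
          ultimately show "x \<in> U" by simp
        qed
      qed
    next
      assume A: "?W \<noteq> UNIV \<and> orth_compl cj ?W \<subseteq> U"
      obtain z where z: "z \<noteq> 0" "\<forall>w\<in>?W. sinner cj w z = 0"
        using exists_orth[of ?W] A by auto
      have zU: "z \<in> U" using A z(2) unfolding orth_compl_def by auto
      show "P ` ?W \<noteq> U"
      proof
        assume "P ` ?W = U"
        then obtain w where w: "w \<in> ?W" "z = P w" using zU by auto
        have "sinner cj (w - P w) z = 0" using Porth[OF zU] .
        then have "sinner cj (P w) z = 0" using z(2) w(1) by (simp add: sinner_diff_left)
        then have "z = 0" using posdef w(2) by simp
        then show False using z by simp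
      qed
    qed
  qed
  have step2: "\<not> robust_to (P \<circ> f) k U (r+1) \<longleftrightarrow>
      (\<exists>J. J \<subseteq> ?K \<and> card J + r + 1 = k \<and> P ` vec.span (f ` J) \<noteq> U)"
  proof
    assume "\<not> robust_to (P \<circ> f) k U (r+1)"
    then obtain I where I: "I \<subseteq> ?K" "card I = r + 1" "vec.span ((P \<circ> f) ` (?K - I)) \<noteq> U"
      unfolding robust_to_def by blast
    have "card I \<le> card ?K" by (rule card_mono[OF finite_atLeastAtMost I(1)])
    then have "card (?K - I) + r + 1 = k" using I finite_subset[OF I(1)] by (simp add: card_Diff_subset)
    then show "\<exists>J. J \<subseteq> ?K \<and> card J + r + 1 = k \<and> P ` vec.span (f ` J) \<noteq> U"
      using I(3) spanP by (intro exI[of _ "?K - I"]) auto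
  next
    assume "\<exists>J. J \<subseteq> ?K \<and> card J + r + 1 = k \<and> P ` vec.span (f ` J) \<noteq> U"
    then obtain J where J: "J \<subseteq> ?K" "card J + r + 1 = k" "P ` vec.span (f ` J) \<noteq> U" by auto
    have fJ: "finite J" using J finite_subset by blast
    have cKJ: "card (?K - J) = r + 1" using J fJ by (simp add: card_Diff_subset)
    have KKJ: "?K - (?K - J) = J" using J by auto
    show "\<not> robust_to (P \<circ> f) k U (r+1)"
    proof
      assume "robust_to (P \<circ> f) k U (r+1)"
      then have "vec.span ((P \<circ> f) ` (?K - (?K - J))) = U"
        unfolding robust_to_def using cKJ by blast
      then show False using J(3) spanP KKJ by simp
    qed
  qed
  have eq: "(J \<subseteq> ?K \<and> card J + r + 1 = k \<and> P ` vec.span (f ` J) \<noteq> U) \<longleftrightarrow>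
     (J \<subseteq> ?K \<and> card J + r + 1 = k \<and> vec.span (f ` J) \<noteq> UNIV \<and> orth_compl cj (vec.span (f ` J)) \<subseteq> U)"
    for J
  proof (cases "J \<subseteq> ?K \<and> card J + r + 1 = k")
    case True then show ?thesis using core[of J] by simp
  next
    case False then show ?thesis by blast
  qed
  show ?thesis by (simp only: step1 step2 eq)
qed

end

theorem theorem2p4:
  shows
  "(\<forall>(f :: nat \<Rightarrow> real^'n) k r U P.
      is_frame f k UNIV \<and> rob f k UNIV = r \<and> vec.subspace U \<and> is_orth_proj id U P \<longrightarrow>
      (rob (P \<circ> f) k U = r \<longleftrightarrow>
        (\<exists>J. J \<subseteq> {1..k} \<and> card J + r + 1 = k \<and> vec.span (f ` J) \<noteq> UNIV \<and>
             orth_compl id (vec.span (f ` J)) \<subseteq> U)))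
   \<and>
   (\<forall>(f :: nat \<Rightarrow> complex^'n) k r U P.
      is_frame f k UNIV \<and> rob f k UNIV = r \<and> vec.subspace U \<and> is_orth_proj cnj U P \<longrightarrow>
      (rob (P \<circ> f) k U = r \<longleftrightarrow>
        (\<exists>J. J \<subseteq> {1..k} \<and> card J + r + 1 = k \<and> vec.span (f ` J) \<noteq> UNIV \<and>
             orth_compl cnj (vec.span (f ` J)) \<subseteq> U)))"
proof (intro conjI allI impI)
  interpret r: cjl "id :: real \<Rightarrow> real" by unfold_locales auto
  have pd: "x = 0" if "sinner id x x = 0" for x :: "real^'n"
  proof -
    have "(\<Sum>i\<in>UNIV. x$i * x$i) = 0" using that by (simp add: sinner_def)
    then have "\<forall>i. x$i * x$i = 0" by (subst (asm) sum_nonneg_eq_0_iff) auto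
    then show ?thesis by (simp add: vec_eq_iff)
  qed
  fix f :: "nat \<Rightarrow> real^'n" and k r :: nat and U :: "(real^'n) set" and P :: "real^'n \<Rightarrow> real^'n"
  assume "is_frame f k UNIV \<and> rob f k UNIV = r \<and> vec.subspace U \<and> is_orth_proj id U P"
  note h = this
  show "rob (P \<circ> f) k U = r \<longleftrightarrow>
        (\<exists>J. J \<subseteq> {1..k} \<and> card J + r + 1 = k \<and> vec.span (f ` J) \<noteq> UNIV \<and>
             orth_compl id (vec.span (f ` J)) \<subseteq> U)"
    by (intro r.main_generic[OF pd]) (use h in auto)
next
  interpret c: cjl "cnj :: complex \<Rightarrow> complex" by unfold_locales auto
  have pd: "x = 0" if "sinner cnj x x = 0" for x :: "complex^'n"
  proof -
    have "(\<Sum>i\<in>UNIV. x$i * cnj (x$i)) = 0" using that by (simp add: sinner_def)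
    moreover have "(\<Sum>i\<in>UNIV. x$i * cnj (x$i)) = complex_of_real (\<Sum>i\<in>UNIV. (norm (x$i))^2)"
      by (simp only: of_real_sum complex_norm_square)
    ultimately have "complex_of_real (\<Sum>i\<in>UNIV. (norm (x$i))^2) = 0" by simp
    then have "(\<Sum>i\<in>UNIV. (norm (x$i))^2) = 0" by (rule of_real_eq_0_iff[THEN iffD1])
    then have "\<forall>i. (norm (x$i))^2 = 0" by (subst (asm) sum_nonneg_eq_0_iff) auto
    then show ?thesis by (simp add: vec_eq_iff)
  qed
  fix f :: "nat \<Rightarrow> complex^'n" and k r :: nat and U :: "(complex^'n) set" and P :: "complex^'n \<Rightarrow> complex^'n"
  assume "is_frame f k UNIV \<and> rob f k UNIV = r \<and> vec.subspace U \<and> is_orth_proj cnj U P"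
  note h = this
  show "rob (P \<circ> f) k U = r \<longleftrightarrow>
        (\<exists>J. J \<subseteq> {1..k} \<and> card J + r + 1 = k \<and> vec.span (f ` J) \<noteq> UNIV \<and>
             orth_compl cnj (vec.span (f ` J)) \<subseteq> U)"
    by (intro c.main_generic[OF pd]) (use h in auto)
qed

end
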